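(* Let $B$ be a norming region and $x\in S$, and define measures $\nu,\mu$ on $S$ by $\nu(y)=g(x,y)$ and $\mu(y)=h(x)\,E^x_h\big[\sum_{n\ge0}\mathbf 1_{\{y\}}(X_n)\big]$. Then for all $y\in S$, $$\nu(y)=\mathbf 1_{B^c}(y)\frac{\mu(y)}{h(y)}+\sum_{z\in B}\mu(z)\,g(z,y).$$
   Context: $S$ countable, $p=(p_{x,y})$ stochastic on $S$, $(d_x)_{x\in S}$ probability distributions on $\mathbb N_0$, $m_x=\sum_mm\,d_x(m)$, $q_{x,y}=m_xp_{x,y}$, $Q=(q_{x,y})$, Green's function $g(x,y)=\sum_{n\ge0}(Q^n)_{x,y}$, assumed finite. For the branching Markov chain (each individual at $z$ independently has a $d_z$-distributed number of children at independent $p(z,\cdot)$-locations), $\mathcal H_B$ is the set of individuals located in $B$ with no strict ancestor in $B$; $\mathbb E^x$ refers to starting with one individual at $x$. A norming region is a finite $B\subset S$ with $\sum_{y\in B}g(x,y)>0$ for all $x$; $h(x)=\mathbb E^x[\#\mathcal H_B]$. $P_h^x$ (expectation $E_h^x$) is the Markov chain started at $x$ with substochastic transition matrix $p^h_{x,y}=\mathbf 1_{B^c}(x)q_{x,y}h(y)/h(x)$, absorbed in a cemetery state $\partial\notin S$ with the missing mass. *)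

theory Defs
  imports "HOL-Probability.Probability"
begin

text \<open>State space S is the countable type 'a. The stochastic matrix p is given
  row-wise as probability mass functions p x, the offspring laws as pmfs d x on nat.\<close>

definition mean_offspring :: "('a \<Rightarrow> nat pmf) \<Rightarrow> 'a \<Rightarrow> ennreal" where
  "mean_offspring d x = (\<integral>\<^sup>+ n. ennreal (real n) \<partial>measure_pmf (d x))"

definition qmat :: "('a \<Rightarrow> nat pmf) \<Rightarrow> ('a \<Rightarrow> 'a pmf) \<Rightarrow> 'a \<Rightarrow> 'a \<Rightarrow> ennreal" where
  "qmat d p x y = mean_offspring d x * ennreal (pmf (p x) y)"

fun Qpow :: "('a \<Rightarrow> nat pmf) \<Rightarrow> ('a \<Rightarrow> 'a pmf) \<Rightarrow> nat \<Rightarrow> 'a \<Rightarrow> 'a \<Rightarrow> ennreal" where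
  "Qpow d p 0 x y = (if x = y then 1 else 0)"
| "Qpow d p (Suc n) x y = (\<integral>\<^sup>+ z. qmat d p x z * Qpow d p n z y \<partial>count_space UNIV)"

definition green :: "('a \<Rightarrow> nat pmf) \<Rightarrow> ('a \<Rightarrow> 'a pmf) \<Rightarrow> 'a \<Rightarrow> 'a \<Rightarrow> ennreal" where
  "green d p x y = (\<Sum>n. Qpow d p n x y)"

definition norming_region :: "('a \<Rightarrow> nat pmf) \<Rightarrow> ('a \<Rightarrow> 'a pmf) \<Rightarrow> 'a set \<Rightarrow> bool" where
  "norming_region d p B \<longleftrightarrow> finite B \<and> (\<forall>x. (\<Sum>y\<in>B. green d p x y) > 0)"

text \<open>Individuals are Ulam-Harris labels,
  written as lists with the most recent generation first: the i-th child of u is i # u,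
  the strict ancestors of u are drop k u for 1 <= k <= length u.
  For every label u, every state z and a flag b there is an independent sample
  omega (u, z, b) with law d z (x) p z. The number of children of u is the first
  component of omega (u, pos u, True); the position of child i # u is the second component
  of omega (i # u, pos u, False). Hence, given the positions, numbers of children and
  children's positions are independent with the prescribed laws.\<close>

definition bmc_space :: "('a \<Rightarrow> nat pmf) \<Rightarrow> ('a \<Rightarrow> 'a pmf)
    \<Rightarrow> ((nat list \<times> 'a \<times> bool) \<Rightarrow> nat \<times> 'a) measure" where
  "bmc_space d p = (\<Pi>\<^sub>M i\<in>UNIV. measure_pmf (pair_pmf (d (fst (snd i))) (p (fst (snd i)))))"

fun bmc_pos :: "'a \<Rightarrow> ((nat list \<times> 'a \<times> bool) \<Rightarrow> nat \<times> 'a) \<Rightarrow> nat list \<Rightarrow> 'a" where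
  "bmc_pos x \<omega> [] = x"
| "bmc_pos x \<omega> (i # u) = snd (\<omega> (i # u, bmc_pos x \<omega> u, False))"

definition bmc_nchildren :: "'a \<Rightarrow> ((nat list \<times> 'a \<times> bool) \<Rightarrow> nat \<times> 'a) \<Rightarrow> nat list \<Rightarrow> nat" where
  "bmc_nchildren x \<omega> u = fst (\<omega> (u, bmc_pos x \<omega> u, True))"

fun bmc_alive :: "'a \<Rightarrow> ((nat list \<times> 'a \<times> bool) \<Rightarrow> nat \<times> 'a) \<Rightarrow> nat list \<Rightarrow> bool" where
  "bmc_alive x \<omega> [] = True"
| "bmc_alive x \<omega> (i # u) = (bmc_alive x \<omega> u \<and> i < bmc_nchildren x \<omega> u)"

definition HB :: "'a set \<Rightarrow> 'a \<Rightarrow> ((nat list \<times> 'a \<times> bool) \<Rightarrow> nat \<times> 'a) \<Rightarrow> nat list set" where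
  "HB B x \<omega> = {u. bmc_alive x \<omega> u \<and> bmc_pos x \<omega> u \<in> B
                 \<and> (\<forall>k\<in>{1..length u}. bmc_pos x \<omega> (drop k u) \<notin> B)}"

definition hfunE :: "('a \<Rightarrow> nat pmf) \<Rightarrow> ('a \<Rightarrow> 'a pmf) \<Rightarrow> 'a set \<Rightarrow> 'a \<Rightarrow> ennreal" where
  "hfunE d p B x = (\<integral>\<^sup>+ \<omega>. emeasure (count_space UNIV) (HB B x \<omega>) \<partial>bmc_space d p)"

definition hfun :: "('a \<Rightarrow> nat pmf) \<Rightarrow> ('a \<Rightarrow> 'a pmf) \<Rightarrow> 'a set \<Rightarrow> 'a \<Rightarrow> real" where
  "hfun d p B x = enn2real (hfunE d p B x)"

definition ph_weight :: "('a \<Rightarrow> nat pmf) \<Rightarrow> ('a \<Rightarrow> 'a pmf) \<Rightarrow> 'a set \<Rightarrow> 'a \<Rightarrow> 'a \<Rightarrow> real" where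
  "ph_weight d p B z y = indicator (-B) z * enn2real (qmat d p z y) * hfun d p B y / hfun d p B z"

text \<open>Transition law from state o: from the cemetery None stay in None; from Some z go to
  Some y with probability p^h(z,y) and to None with the missing mass.\<close>
definition ph_kernel :: "('a \<Rightarrow> nat pmf) \<Rightarrow> ('a \<Rightarrow> 'a pmf) \<Rightarrow> 'a set \<Rightarrow> 'a option \<Rightarrow> 'a option pmf" where
  "ph_kernel d p B s = embed_pmf (\<lambda>t. case s of
       None \<Rightarrow> (if t = None then 1 else 0)
     | Some z \<Rightarrow> (case t of
           Some y \<Rightarrow> ph_weight d p B z y
         | None \<Rightarrow> 1 - enn2real (\<integral>\<^sup>+ y. ennreal (ph_weight d p B z y) \<partial>count_space UNIV)))"

text \<open>The chain: omega (n, s) is an independent sample of ph_kernel s for every time n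
  and state s; X_0 = Some x, X_{n+1} = omega (n, X_n).\<close>
definition hchain_space :: "('a \<Rightarrow> nat pmf) \<Rightarrow> ('a \<Rightarrow> 'a pmf) \<Rightarrow> 'a set
    \<Rightarrow> ((nat \<times> 'a option) \<Rightarrow> 'a option) measure" where
  "hchain_space d p B = (\<Pi>\<^sub>M i\<in>UNIV. measure_pmf (ph_kernel d p B (snd i)))"

fun hchain :: "'a \<Rightarrow> ((nat \<times> 'a option) \<Rightarrow> 'a option) \<Rightarrow> nat \<Rightarrow> 'a option" where
  "hchain x \<omega> 0 = Some x"
| "hchain x \<omega> (Suc n) = \<omega> (n, hchain x \<omega> n)"

definition hvisits :: "('a \<Rightarrow> nat pmf) \<Rightarrow> ('a \<Rightarrow> 'a pmf) \<Rightarrow> 'a set \<Rightarrow> 'a \<Rightarrow> 'a \<Rightarrow> ennreal" where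
  "hvisits d p B x y = (\<integral>\<^sup>+ \<omega>. (\<Sum>n. indicator {Some y} (hchain x \<omega> n)) \<partial>hchain_space d p B)"

definition mu_meas :: "('a \<Rightarrow> nat pmf) \<Rightarrow> ('a \<Rightarrow> 'a pmf) \<Rightarrow> 'a set \<Rightarrow> 'a \<Rightarrow> 'a \<Rightarrow> real" where
  "mu_meas d p B x y = hfun d p B x * enn2real (hvisits d p B x y)"

end

theory Submission
  imports Defs
begin


lemma nn_delta_left:
  "(\<integral>\<^sup>+z. (if x = z then 1 else 0) * f z \<partial>count_space UNIV) = (f x :: ennreal)"
proof -
  have "(\<integral>\<^sup>+z. (if x = z then 1 else 0) * f z \<partial>count_space UNIV)
      = (\<integral>\<^sup>+z. f z * indicator {x} z \<partial>count_space UNIV)"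
    by (intro nn_integral_cong) (auto split: split_indicator)
  also have "\<dots> = f x" by simp
  finally show ?thesis .
qed

lemma nn_delta_right:
  "(\<integral>\<^sup>+z. f z * (if z = y then 1 else 0) \<partial>count_space UNIV) = (f y :: ennreal)"
proof -
  have "(\<integral>\<^sup>+z. f z * (if z = y then 1 else 0) \<partial>count_space UNIV)
      = (\<integral>\<^sup>+z. f z * indicator {y} z \<partial>count_space UNIV)"
    by (intro nn_integral_cong) (auto split: split_indicator)
  also have "\<dots> = f y" by simp
  finally show ?thesis .
qed

lemma suminf_nn: "(\<Sum>n. f n) = (\<integral>\<^sup>+n. (f n::ennreal) \<partial>count_space UNIV)"
  by (simp add: nn_integral_count_space_nat)

lemma sum_as_nn:
  assumes "finite A"
  shows "(\<Sum>k\<in>A. g k) = (\<integral>\<^sup>+k. indicator A k * (g k::ennreal) \<partial>count_space UNIV)"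
proof -
  have "(\<Sum>k\<in>A. g k) = (\<integral>\<^sup>+k. g k \<partial>count_space A)"
    using assms by (simp add: nn_integral_count_space_finite)
  also have "\<dots> = (\<integral>\<^sup>+k. g k * indicator A k \<partial>count_space UNIV)"
    by (simp add: nn_integral_count_space_indicator)
  finally show ?thesis by (simp add: mult.commute)
qed

lemma ennreal_cauchy:
  fixes f :: "nat \<Rightarrow> nat \<Rightarrow> ennreal"
  shows "(\<Sum>n. \<Sum>k\<le>n. f k (n-k)) = (\<Sum>k. \<Sum>j. f k j)"
proof -
  have "(\<Sum>n. \<Sum>k\<le>n. f k (n-k)) = (\<integral>\<^sup>+n. (\<integral>\<^sup>+k. indicator {..n} k * f k (n-k) \<partial>count_space UNIV) \<partial>count_space UNIV)"
    unfolding suminf_nn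
    by (intro nn_integral_cong) (simp add: sum_as_nn)
  also have "\<dots> = (\<integral>\<^sup>+k. (\<integral>\<^sup>+n. indicator {..n} k * f k (n-k) \<partial>count_space UNIV) \<partial>count_space UNIV)"
    by (rule nn_integral_count_space_nn_integral) auto
  also have "\<dots> = (\<integral>\<^sup>+k. (\<integral>\<^sup>+j. f k j \<partial>count_space UNIV) \<partial>count_space UNIV)"
  proof (rule nn_integral_cong)
    fix k :: nat
    have "(\<integral>\<^sup>+n. indicator {..n} k * f k (n-k) \<partial>count_space UNIV)
        = (\<integral>\<^sup>+n. f k (n-k) * indicator {k..} n \<partial>count_space UNIV)"
      by (intro nn_integral_cong) (auto split: split_indicator)
    also have "\<dots> = (\<integral>\<^sup>+n. f k (n-k) \<partial>count_space {k..})"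
      by (simp add: nn_integral_count_space_indicator)
    also have "\<dots> = (\<integral>\<^sup>+j. f k ((j+k)-k) \<partial>count_space UNIV)"
    proof -
      have bij: "bij_betw (\<lambda>j. j + k) UNIV {k..}"
        by (rule bij_betwI[where g="\<lambda>n. n - k"]) auto
      show ?thesis using nn_integral_bij_count_space[OF bij, of "\<lambda>n. f k (n-k)"] by simp
    qed
    finally show "(\<integral>\<^sup>+n. indicator {..n} k * f k (n-k) \<partial>count_space UNIV)
        = (\<integral>\<^sup>+j. f k j \<partial>count_space UNIV)" by simp
  qed
  finally show ?thesis unfolding suminf_nn .
qed



fun Fp :: "('a \<Rightarrow> nat pmf) \<Rightarrow> ('a \<Rightarrow> 'a pmf) \<Rightarrow> 'a set \<Rightarrow> nat \<Rightarrow> 'a \<Rightarrow> 'a \<Rightarrow> ennreal" where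
  "Fp d p B 0 x y = (if x = y then 1 else 0)"
| "Fp d p B (Suc n) x y = (\<integral>\<^sup>+z. Fp d p B n x z * indicator (-B) z * qmat d p z y \<partial>count_space UNIV)"

definition Gt :: "('a \<Rightarrow> nat pmf) \<Rightarrow> ('a \<Rightarrow> 'a pmf) \<Rightarrow> 'a set \<Rightarrow> 'a \<Rightarrow> 'a \<Rightarrow> ennreal" where
  "Gt d p B x y = (\<Sum>n. Fp d p B n x y)"

lemma nn_swap:
  fixes f :: "'a::countable \<Rightarrow> 'b::countable \<Rightarrow> ennreal"
  shows "(\<integral>\<^sup>+x. \<integral>\<^sup>+y. f x y \<partial>count_space UNIV \<partial>count_space UNIV)
       = (\<integral>\<^sup>+y. \<integral>\<^sup>+x. f x y \<partial>count_space UNIV \<partial>count_space UNIV)"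
  by (rule nn_integral_count_space_nn_integral) auto

lemma Fp_left:
  fixes d :: "'a::countable \<Rightarrow> nat pmf"
  shows "Fp d p B (Suc n) x y = indicator (-B) x * (\<integral>\<^sup>+w. qmat d p x w * Fp d p B n w y \<partial>count_space UNIV)"
proof (induction n arbitrary: y)
  case 0
  have "Fp d p B (Suc 0) x y = (\<integral>\<^sup>+z. (if x = z then 1 else 0) * (indicator (-B) z * qmat d p z y) \<partial>count_space UNIV)"
    by (simp add: mult.assoc)
  also have "\<dots> = indicator (-B) x * qmat d p x y" by (rule nn_delta_left)
  also have "qmat d p x y = (\<integral>\<^sup>+w. qmat d p x w * Fp d p B 0 w y \<partial>count_space UNIV)"
    by (simp add: nn_delta_right)
  finally show ?case .
next
  case (Suc n)
  have "Fp d p B (Suc (Suc n)) x y = (\<integral>\<^sup>+z. (indicator (-B) x * (\<integral>\<^sup>+w. qmat d p x w * Fp d p B n w z \<partial>count_space UNIV)) * indicator (-B) z * qmat d p z y \<partial>count_space UNIV)"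
    by (subst Fp.simps(2)) (simp only: Suc.IH)
  also have "\<dots> = indicator (-B) x * (\<integral>\<^sup>+z. (\<integral>\<^sup>+w. qmat d p x w * (Fp d p B n w z * indicator (-B) z * qmat d p z y) \<partial>count_space UNIV) \<partial>count_space UNIV)"
    by (simp add: nn_integral_cmult[symmetric] nn_integral_multc[symmetric] mult.assoc)
  also have "\<dots> = indicator (-B) x * (\<integral>\<^sup>+w. (\<integral>\<^sup>+z. qmat d p x w * (Fp d p B n w z * indicator (-B) z * qmat d p z y) \<partial>count_space UNIV) \<partial>count_space UNIV)"
    by (simp add: nn_swap[of "\<lambda>z w. qmat d p x w * (Fp d p B n w z * indicator (-B) z * qmat d p z y)"])
  also have "\<dots> = indicator (-B) x * (\<integral>\<^sup>+w. qmat d p x w * Fp d p B (Suc n) w y \<partial>count_space UNIV)"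
    by (simp add: nn_integral_cmult)
  finally show ?case .
qed

lemma Fp_le_Qpow:
  fixes d :: "'a::countable \<Rightarrow> nat pmf"
  shows "Fp d p B n x y \<le> Qpow d p n x y"
proof (induction n arbitrary: x)
  case 0 then show ?case by simp
next
  case (Suc n)
  have "Fp d p B (Suc n) x y \<le> (\<integral>\<^sup>+w. qmat d p x w * Fp d p B n w y \<partial>count_space UNIV)"
    unfolding Fp_left by (simp split: split_indicator)
  also have "\<dots> \<le> (\<integral>\<^sup>+w. qmat d p x w * Qpow d p n w y \<partial>count_space UNIV)"
    by (intro nn_integral_mono mult_left_mono Suc) auto
  finally show ?case by simp
qed

lemma Gt_le_green:
  fixes d :: "'a::countable \<Rightarrow> nat pmf"
  shows "Gt d p B x y \<le> green d p x y"
  unfolding Gt_def green_def by (intro suminf_le Fp_le_Qpow) auto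

lemma Fp_B:
  fixes d :: "'a::countable \<Rightarrow> nat pmf"
  assumes "x \<in> B"
  shows "Fp d p B (Suc n) x y = 0"
  using assms by (simp add: Fp_left del: Fp.simps(2))

lemma Gt_B:
  fixes d :: "'a::countable \<Rightarrow> nat pmf"
  assumes "x \<in> B"
  shows "Gt d p B x y = (if x = y then 1 else 0)"
proof -
  have "Gt d p B x y = (\<Sum>n. Fp d p B (n + 1) x y) + (\<Sum>n<1. Fp d p B n x y)"
    unfolding Gt_def by (rule suminf_offset) simp
  also have "\<dots> = (if x = y then 1 else 0)" using assms by (simp add: Fp_B del: Fp.simps(2))
  finally show ?thesis .
qed



lemma Qpow_decomp:
  fixes d :: "'a::countable \<Rightarrow> nat pmf"
  assumes finB: "finite B"
  shows "Qpow d p n x y = Fp d p B n x y * indicator (-B) y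
           + (\<Sum>k\<le>n. \<Sum>z\<in>B. Fp d p B k x z * Qpow d p (n-k) z y)"
proof (induction n arbitrary: x)
  case 0
  show ?case
  proof (cases "y \<in> B")
    case True
    then show ?thesis using finB
      by (simp add: if_distrib[where f="\<lambda>a. a * _"] sum.delta cong: if_cong)
  next
    case False
    then show ?thesis using finB
      by (auto simp: if_distrib[where f="\<lambda>a. a * _"] sum.delta cong: if_cong)
  qed
next
  case (Suc n)
  show ?case
  proof (cases "x \<in> B")
    case True
    have "(\<Sum>k\<le>Suc n. \<Sum>z\<in>B. Fp d p B k x z * Qpow d p (Suc n-k) z y)
        = (\<Sum>z\<in>B. Fp d p B 0 x z * Qpow d p (Suc n) z y)
          + (\<Sum>k\<le>n. \<Sum>z\<in>B. Fp d p B (Suc k) x z * Qpow d p (Suc n - Suc k) z y)"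
      by (subst sum.atMost_Suc_shift) simp
    also have "\<dots> = Qpow d p (Suc n) x y"
      using True finB by (simp add: Fp_B sum.delta if_distrib[where f="\<lambda>a. a * _"] cong: if_cong del: Fp.simps(2) Qpow.simps(2))
    finally show ?thesis using True by (simp add: Fp_B del: Fp.simps(2) Qpow.simps(2))
  next
    case False
    have "Qpow d p (Suc n) x y = (\<integral>\<^sup>+w. qmat d p x w * (Fp d p B n w y * indicator (-B) y
           + (\<Sum>k\<le>n. \<Sum>z\<in>B. Fp d p B k w z * Qpow d p (n-k) z y)) \<partial>count_space UNIV)"
      by (simp only: Qpow.simps(2) Suc.IH)
    also have "\<dots> = (\<integral>\<^sup>+w. qmat d p x w * Fp d p B n w y \<partial>count_space UNIV) * indicator (-B) y
           + (\<Sum>k\<le>n. \<Sum>z\<in>B. (\<integral>\<^sup>+w. qmat d p x w * Fp d p B k w z \<partial>count_space UNIV) * Qpow d p (n-k) z y)"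
      by (simp add: distrib_left nn_integral_add nn_integral_sum sum_distrib_left
            nn_integral_multc mult.assoc[symmetric] del: Fp.simps(2) Qpow.simps(2))
    also have "\<dots> = Fp d p B (Suc n) x y * indicator (-B) y
           + (\<Sum>k\<le>n. \<Sum>z\<in>B. Fp d p B (Suc k) x z * Qpow d p (Suc n - Suc k) z y)"
      using False by (simp add: Fp_left del: Fp.simps(2) Qpow.simps(2))
    also have "(\<Sum>k\<le>n. \<Sum>z\<in>B. Fp d p B (Suc k) x z * Qpow d p (Suc n - Suc k) z y)
        = (\<Sum>k\<le>Suc n. \<Sum>z\<in>B. Fp d p B k x z * Qpow d p (Suc n-k) z y)"
    proof -
      have "(\<Sum>z\<in>B. Fp d p B 0 x z * Qpow d p (Suc n) z y) = 0"
        using False by (intro sum.neutral) auto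
      then show ?thesis by (subst sum.atMost_Suc_shift) (simp del: Fp.simps Qpow.simps(2))
    qed
    finally show ?thesis .
  qed
qed

lemma green_decomp:
  fixes d :: "'a::countable \<Rightarrow> nat pmf"
  assumes finB: "finite B"
  shows "green d p x y = Gt d p B x y * indicator (-B) y + (\<Sum>z\<in>B. Gt d p B x z * green d p z y)"
proof -
  have "green d p x y = (\<Sum>n. Fp d p B n x y * indicator (-B) y
           + (\<Sum>z\<in>B. \<Sum>k\<le>n. Fp d p B k x z * Qpow d p (n-k) z y))"
    unfolding green_def by (subst Qpow_decomp[OF finB]) (simp add: sum.swap[of _ B])
  also have "\<dots> = (\<Sum>n. Fp d p B n x y) * indicator (-B) y
           + (\<Sum>z\<in>B. \<Sum>n. \<Sum>k\<le>n. Fp d p B k x z * Qpow d p (n-k) z y)"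
    by (simp add: suminf_add[symmetric] suminf_sum[symmetric] del: Fp.simps(2) Qpow.simps(2))
  also have "\<dots> = Gt d p B x y * indicator (-B) y + (\<Sum>z\<in>B. Gt d p B x z * green d p z y)"
    unfolding Gt_def green_def
    by (simp add: ennreal_cauchy[where f="\<lambda>k j. Fp d p B k _ _ * Qpow d p j _ _"]
          ennreal_suminf_cmult ennreal_suminf_multc del: Fp.simps(2) Qpow.simps(2))
  finally show ?thesis .
qed



lemma indep_coord:
  fixes M :: "'i \<Rightarrow> 'b measure"
  assumes prob: "\<And>i. i \<in> I \<Longrightarrow> prob_space (M i)" and c: "c \<in> I"
    and A: "A \<in> sets (Pi\<^sub>M I M)" and X: "X \<in> sets (M c)"
    and inv: "\<And>w a. w \<in> space (Pi\<^sub>M I M) \<Longrightarrow> a \<in> space (M c) \<Longrightarrow> (w(c:=a) \<in> A \<longleftrightarrow> w \<in> A)"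
  shows "emeasure (Pi\<^sub>M I M) (A \<inter> {w\<in>space (Pi\<^sub>M I M). w c \<in> X})
       = emeasure (Pi\<^sub>M I M) A * emeasure (M c) X"
proof -
  define J where "J = I - {c}"
  have IJ: "insert c J = I" using c by (auto simp: J_def)
  interpret Mc: prob_space "M c" using prob c by auto
  interpret PJ: prob_space "Pi\<^sub>M J M" using prob by (intro prob_space_PiM) (auto simp: J_def)
  define g where "g = (\<lambda>(a::'b, f::'i \<Rightarrow> 'b). f(c := a))"
  have gm: "g \<in> measurable (M c \<Otimes>\<^sub>M Pi\<^sub>M J M) (Pi\<^sub>M I M)"
    unfolding g_def IJ[symmetric] by measurable
  have eq: "distr (M c \<Otimes>\<^sub>M Pi\<^sub>M J M) (Pi\<^sub>M I M) g = Pi\<^sub>M I M"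
    using distr_pair_PiM_eq_PiM[of J M c] prob c unfolding IJ g_def by (auto simp: J_def)
  obtain a0 where a0: "a0 \<in> space (M c)" using Mc.not_empty by auto
  define A' where "A' = {f \<in> space (Pi\<^sub>M J M). f(c := a0) \<in> A}"
  have A'm: "A' \<in> sets (Pi\<^sub>M J M)"
  proof -
    have "(\<lambda>f. g (a0, f)) \<in> measurable (Pi\<^sub>M J M) (Pi\<^sub>M I M)"
      using gm a0 by measurable
    then have "(\<lambda>f. g (a0, f)) -` A \<inter> space (Pi\<^sub>M J M) \<in> sets (Pi\<^sub>M J M)"
      using A by (rule measurable_sets)
    also have "(\<lambda>f. g (a0, f)) -` A \<inter> space (Pi\<^sub>M J M) = A'"
      by (auto simp: A'_def g_def)
    finally show ?thesis .
  qed
  have key: "emeasure (Pi\<^sub>M I M) (A \<inter> {w\<in>space (Pi\<^sub>M I M). w c \<in> Y})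
       = emeasure (M c) Y * emeasure (Pi\<^sub>M J M) A'" if Y: "Y \<in> sets (M c)" for Y
  proof -
    have S: "A \<inter> {w\<in>space (Pi\<^sub>M I M). w c \<in> Y} \<in> sets (Pi\<^sub>M I M)"
    proof -
      have "{w\<in>space (Pi\<^sub>M I M). w c \<in> Y} \<in> sets (Pi\<^sub>M I M)"
        using c Y by measurable
      then show ?thesis using A by auto
    qed
    have pre: "g -` (A \<inter> {w\<in>space (Pi\<^sub>M I M). w c \<in> Y}) \<inter> space (M c \<Otimes>\<^sub>M Pi\<^sub>M J M) = Y \<times> A'"
    proof (intro set_eqI iffI)
      fix z assume z: "z \<in> g -` (A \<inter> {w\<in>space (Pi\<^sub>M I M). w c \<in> Y}) \<inter> space (M c \<Otimes>\<^sub>M Pi\<^sub>M J M)"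
      obtain a f where zaf: "z = (a, f)" by (cases z)
      have af: "a \<in> space (M c)" "f \<in> space (Pi\<^sub>M J M)" using z zaf by (auto simp: space_pair_measure)
      have gA: "f(c := a) \<in> A" "a \<in> Y" using z zaf by (auto simp: g_def)
      have sp: "f(c := a0) \<in> space (Pi\<^sub>M I M)"
        using measurable_space[OF gm, of "(a0, f)"] a0 af by (auto simp: g_def space_pair_measure)
      have "(f(c := a0))(c := a) \<in> A \<longleftrightarrow> f(c := a0) \<in> A" by (rule inv[OF sp af(1)])
      then have "f(c := a0) \<in> A" using gA by simp
      then show "z \<in> Y \<times> A'" using zaf gA af by (auto simp: A'_def)
    next
      fix z assume z: "z \<in> Y \<times> A'"
      obtain a f where zaf: "z = (a, f)" by (cases z)
      have af: "a \<in> space (M c)" "f \<in> space (Pi\<^sub>M J M)" "a \<in> Y" "f(c := a0) \<in> A"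
        using z zaf Y sets.sets_into_space by (auto simp: A'_def)
      have sp: "f(c := a0) \<in> space (Pi\<^sub>M I M)"
        using measurable_space[OF gm, of "(a0, f)"] a0 af by (auto simp: g_def space_pair_measure)
      have sp2: "f(c := a) \<in> space (Pi\<^sub>M I M)"
        using measurable_space[OF gm, of "(a, f)"] af by (auto simp: g_def space_pair_measure)
      have "(f(c := a0))(c := a) \<in> A \<longleftrightarrow> f(c := a0) \<in> A" by (rule inv[OF sp af(1)])
      then have "f(c := a) \<in> A" using af by simp
      then show "z \<in> g -` (A \<inter> {w\<in>space (Pi\<^sub>M I M). w c \<in> Y}) \<inter> space (M c \<Otimes>\<^sub>M Pi\<^sub>M J M)"
        using zaf af sp2 by (auto simp: g_def space_pair_measure)
    qed
    have "emeasure (Pi\<^sub>M I M) (A \<inter> {w\<in>space (Pi\<^sub>M I M). w c \<in> Y})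
        = emeasure (distr (M c \<Otimes>\<^sub>M Pi\<^sub>M J M) (Pi\<^sub>M I M) g) (A \<inter> {w\<in>space (Pi\<^sub>M I M). w c \<in> Y})"
      by (simp add: eq)
    also have "\<dots> = emeasure (M c \<Otimes>\<^sub>M Pi\<^sub>M J M) (Y \<times> A')"
      using S gm by (subst emeasure_distr) (simp_all only: pre)
    also have "\<dots> = emeasure (M c) Y * emeasure (Pi\<^sub>M J M) A'"
      using Y A'm by (rule PJ.emeasure_pair_measure_Times)
    finally show ?thesis .
  qed
  have "A \<inter> {w\<in>space (Pi\<^sub>M I M). w c \<in> space (M c)} = A"
    using A[THEN sets.sets_into_space] c by (auto simp: space_PiM)
  then have "emeasure (Pi\<^sub>M I M) A = emeasure (Pi\<^sub>M J M) A'"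
    using key[of "space (M c)"] Mc.emeasure_space_1 by simp
  then show ?thesis using key[OF X] by (simp add: mult.commute)
qed



fun Kp :: "('s \<Rightarrow> 's pmf) \<Rightarrow> 's \<Rightarrow> nat \<Rightarrow> 's \<Rightarrow> ennreal" where
  "Kp K s0 0 t = (if s0 = t then 1 else 0)"
| "Kp K s0 (Suc n) t = (\<integral>\<^sup>+s. Kp K s0 n s * pmf (K s) t \<partial>count_space UNIV)"

fun mchain :: "'s \<Rightarrow> ((nat \<times> 's) \<Rightarrow> 's) \<Rightarrow> nat \<Rightarrow> 's" where
  "mchain s0 w 0 = s0"
| "mchain s0 w (Suc n) = w (n, mchain s0 w n)"

lemma hchain_eq_chain: "hchain x w n = mchain (Some x) w n"
  by (induction n) auto

lemma chain_upd: "n \<le> m \<Longrightarrow> mchain s0 (w((m, s) := a)) n = mchain s0 w n"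
  by (induction n) auto

lemma chain_meas:
  fixes K :: "'s::countable \<Rightarrow> 's pmf"
  shows "(\<lambda>w. mchain s0 w n) \<in> measurable (Pi\<^sub>M UNIV (\<lambda>i. measure_pmf (K (snd i)))) (count_space UNIV)"
proof (induction n)
  case 0 then show ?case by simp
next
  case (Suc n)
  have comp: "(\<lambda>w. w (n, s)) \<in> measurable (Pi\<^sub>M UNIV (\<lambda>i. measure_pmf (K (snd i)))) (count_space UNIV)" for s
    by (rule measurable_compose[OF measurable_component_singleton[of "(n, s)"]]) auto
  show ?case
    by (simp only: mchain.simps) (rule measurable_compose_countable'[OF comp Suc], auto)
qed

lemma chain_dist:
  fixes K :: "'s::countable \<Rightarrow> 's pmf"
  defines "P \<equiv> Pi\<^sub>M UNIV (\<lambda>i. measure_pmf (K (snd i)))"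
  shows "emeasure P {w\<in>space P. mchain s0 w n = t} = Kp K s0 n t"
proof (induction n arbitrary: t)
  case 0
  have "{w\<in>space P. mchain s0 w 0 = t} = (if s0 = t then space P else {})" by auto
  moreover have "prob_space P" unfolding P_def by (intro prob_space_PiM) (simp add: measure_pmf.prob_space_axioms)
  ultimately show ?case by (simp add: prob_space.emeasure_space_1)
next
  case (Suc n)
  have meas: "{w\<in>space P. mchain s0 w n = s} \<in> sets P" for s
  proof -
    have "(\<lambda>w. mchain s0 w n) -` {s} \<inter> space P \<in> sets P"
      unfolding P_def by (rule measurable_sets[OF chain_meas]) auto
    then show ?thesis by (simp add: vimage_def Int_def conj_commute)
  qed
  have "{w\<in>space P. mchain s0 w (Suc n) = t}
      = (\<Union>s\<in>UNIV. {w\<in>space P. mchain s0 w n = s} \<inter> {w\<in>space P. w (n, s) \<in> {t}})"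
    by auto
  then have "emeasure P {w\<in>space P. mchain s0 w (Suc n) = t}
      = (\<integral>\<^sup>+s. emeasure P ({w\<in>space P. mchain s0 w n = s} \<inter> {w\<in>space P. w (n, s) \<in> {t}}) \<partial>count_space UNIV)"
  proof (simp only:, intro emeasure_UN_countable)
    fix s
    have "{w\<in>space P. w (n, s) \<in> {t}} \<in> sets P"
      unfolding P_def by measurable
    then show "{w\<in>space P. mchain s0 w n = s} \<inter> {w\<in>space P. w (n, s) \<in> {t}} \<in> sets P"
      using meas by auto
  qed (auto simp: disjoint_family_on_def)
  also have "\<dots> = (\<integral>\<^sup>+s. Kp K s0 n s * pmf (K s) t \<partial>count_space UNIV)"
  proof (rule nn_integral_cong)
    fix s
    have "emeasure P ({w\<in>space P. mchain s0 w n = s} \<inter> {w\<in>space P. w (n, s) \<in> {t}})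
        = emeasure P {w\<in>space P. mchain s0 w n = s} * emeasure (measure_pmf (K s)) {t}"
      unfolding P_def
    proof (rule indep_coord[where c="(n, s)" and M="\<lambda>i. measure_pmf (K (snd i))", simplified])
      show "{w\<in>space (Pi\<^sub>M UNIV (\<lambda>i. measure_pmf (K (snd i)))). mchain s0 w n = s} \<in> sets (Pi\<^sub>M UNIV (\<lambda>i. measure_pmf (K (snd i))))"
        using meas unfolding P_def .
      show "prob_space (measure_pmf (K b))" for b by (rule measure_pmf.prob_space_axioms)
      fix w a
      show "(w((n, s) := a) \<in> {w\<in>space (Pi\<^sub>M UNIV (\<lambda>i. measure_pmf (K (snd i)))). mchain s0 w n = s})
          = (w \<in> {w\<in>space (Pi\<^sub>M UNIV (\<lambda>i. measure_pmf (K (snd i)))). mchain s0 w n = s})"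
        if "w \<in> space (Pi\<^sub>M UNIV (\<lambda>i. measure_pmf (K (snd i))))"
        using that by (simp add: chain_upd space_PiM)
    qed simp
    then show "emeasure P ({w\<in>space P. mchain s0 w n = s} \<inter> {w\<in>space P. w (n, s) \<in> {t}}) = Kp K s0 n s * pmf (K s) t"
      by (simp add: Suc emeasure_pmf_single)
  qed
  finally show ?case by simp
qed

lemma chain_visits:
  fixes K :: "'s::countable \<Rightarrow> 's pmf"
  shows "(\<integral>\<^sup>+w. (\<Sum>n. indicator {t} (mchain s0 w n)) \<partial>Pi\<^sub>M UNIV (\<lambda>i. measure_pmf (K (snd i))))
       = (\<Sum>n. Kp K s0 n t)"
proof -
  let ?P = "Pi\<^sub>M UNIV (\<lambda>i. measure_pmf (K (snd i)))"
  have "(\<integral>\<^sup>+w. (\<Sum>n. indicator {t} (mchain s0 w n)) \<partial>?P) = (\<Sum>n. \<integral>\<^sup>+w. indicator {t} (mchain s0 w n) \<partial>?P)"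
    by (rule nn_integral_suminf) (rule measurable_compose[OF chain_meas], simp)
  also have "\<dots> = (\<Sum>n. Kp K s0 n t)"
  proof (rule suminf_cong)
    fix n
    have "(\<integral>\<^sup>+w. indicator {t} (mchain s0 w n) \<partial>?P) = (\<integral>\<^sup>+w. indicator {w\<in>space ?P. mchain s0 w n = t} w \<partial>?P)"
      by (rule nn_integral_cong) (auto split: split_indicator)
    also have "\<dots> = emeasure ?P {w\<in>space ?P. mchain s0 w n = t}"
    proof (rule nn_integral_indicator)
      have "(\<lambda>w. mchain s0 w n) -` {t} \<inter> space ?P \<in> sets ?P"
        by (rule measurable_sets[OF chain_meas]) auto
      then show "{w\<in>space ?P. mchain s0 w n = t} \<in> sets ?P" by (simp add: vimage_def Int_def conj_commute)
    qed
    also have "\<dots> = Kp K s0 n t" by (rule chain_dist)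
    finally show "(\<integral>\<^sup>+w. indicator {t} (mchain s0 w n) \<partial>?P) = Kp K s0 n t" .
  qed
  finally show ?thesis .
qed



lemma list_len_Suc:
  fixes f :: "nat list \<Rightarrow> ennreal"
  shows "(\<integral>\<^sup>+u. indicator {u. length u = Suc n} u * f u \<partial>count_space UNIV)
       = (\<integral>\<^sup>+i. \<integral>\<^sup>+v. indicator {v. length v = n} v * f (i # v) \<partial>count_space UNIV \<partial>count_space UNIV)"
proof -
  have "(\<integral>\<^sup>+i. \<integral>\<^sup>+v. indicator {v. length v = n} v * f (i # v) \<partial>count_space UNIV \<partial>count_space UNIV)
      = (\<integral>\<^sup>+iv. indicator {v. length v = n} (snd iv) * f (fst iv # snd iv) \<partial>count_space UNIV)"
    using nn_integral_fst_count_space[of "\<lambda>iv. indicator {v. length v = n} (snd iv) * f (fst iv # snd iv)"]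
    by simp
  also have "\<dots> = (\<integral>\<^sup>+iv. f (fst iv # snd iv) * indicator (UNIV \<times> {v. length v = n}) iv \<partial>count_space UNIV)"
    by (rule nn_integral_cong) (auto split: split_indicator)
  also have "\<dots> = (\<integral>\<^sup>+iv. f (fst iv # snd iv) \<partial>count_space (UNIV \<times> {v. length v = n}))"
    by (simp add: nn_integral_count_space_indicator)
  also have "\<dots> = (\<integral>\<^sup>+u. f u \<partial>count_space {u. length u = Suc n})"
  proof (rule nn_integral_bij_count_space[where g="\<lambda>iv. fst iv # snd iv"])
    show "bij_betw (\<lambda>iv. fst iv # snd iv) (UNIV \<times> {v. length v = n}) {u. length u = Suc n}"
      by (rule bij_betwI[where g="\<lambda>u. (hd u, tl u)"]) (auto simp: length_Suc_conv)
  qed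
  also have "\<dots> = (\<integral>\<^sup>+u. f u * indicator {u. length u = Suc n} u \<partial>count_space UNIV)"
    by (simp add: nn_integral_count_space_indicator)
  finally show ?thesis by (simp add: mult.commute)
qed

lemma list_len_0:
  fixes f :: "nat list \<Rightarrow> ennreal"
  shows "(\<integral>\<^sup>+u. indicator {u. length u = 0} u * f u \<partial>count_space UNIV) = f []"
proof -
  have "(\<integral>\<^sup>+u. indicator {u. length u = 0} u * f u \<partial>count_space UNIV)
      = (\<integral>\<^sup>+u. f u * indicator {[]} u \<partial>count_space UNIV)"
    by (rule nn_integral_cong) (auto split: split_indicator)
  then show ?thesis by simp
qed

lemma sum_by_len:
  fixes f :: "nat list \<Rightarrow> ennreal"
  shows "(\<integral>\<^sup>+u. f u \<partial>count_space UNIV)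
       = (\<Sum>n. \<integral>\<^sup>+u. indicator {u. length u = n} u * f u \<partial>count_space UNIV)"
proof -
  have "(\<Sum>n. \<integral>\<^sup>+u. indicator {u. length u = n} u * f u \<partial>count_space UNIV)
      = (\<integral>\<^sup>+u. (\<Sum>n. indicator {u. length u = n} u * f u) \<partial>count_space UNIV)"
    by (rule nn_integral_suminf[symmetric]) auto
  also have "\<dots> = (\<integral>\<^sup>+u. f u \<partial>count_space UNIV)"
  proof (rule nn_integral_cong)
    fix u :: "nat list"
    have "(\<Sum>n. indicator {u. length u = n} u * f u) = (\<Sum>n\<in>{length u}. indicator {u. length u = n} u * f u)"
      by (rule suminf_finite) auto
    then show "(\<Sum>n. indicator {u. length u = n} u * f u) = f u" by simp
  qed
  finally show ?thesis ..
qed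

lemma sum_tail:
  fixes D :: "nat pmf"
  shows "(\<integral>\<^sup>+i. emeasure (measure_pmf D) {i<..} \<partial>count_space UNIV) = (\<integral>\<^sup>+n. ennreal (real n) \<partial>measure_pmf D)"
proof -
  have "(\<integral>\<^sup>+i. emeasure (measure_pmf D) {i<..} \<partial>count_space UNIV)
      = (\<integral>\<^sup>+i. \<integral>\<^sup>+n. indicator {i<..} n \<partial>measure_pmf D \<partial>count_space UNIV)"
    by (rule nn_integral_cong) (simp add: nn_integral_indicator)
  also have "\<dots> = (\<integral>\<^sup>+n. \<integral>\<^sup>+i. indicator {i<..} n \<partial>count_space UNIV \<partial>measure_pmf D)"
    by (rule nn_integral_count_space_nn_integral[symmetric]) auto
  also have "\<dots> = (\<integral>\<^sup>+n. ennreal (real n) \<partial>measure_pmf D)"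
  proof (rule nn_integral_cong)
    fix n :: nat
    have "(\<integral>\<^sup>+i. indicator {i<..} n \<partial>count_space UNIV) = (\<integral>\<^sup>+i. indicator {..<n} i \<partial>count_space UNIV)"
      by (rule nn_integral_cong) (auto split: split_indicator)
    also have "\<dots> = emeasure (count_space UNIV) {..<n}"
      by (rule nn_integral_indicator) simp
    also have "\<dots> = ennreal (real n)" by (simp add: ennreal_of_nat_eq_real_of_nat)
    finally show "(\<integral>\<^sup>+i. indicator {i<..} n \<partial>count_space UNIV) = ennreal (real n)" .
  qed
  finally show ?thesis .
qed



abbreviation BM :: "('a \<Rightarrow> nat pmf) \<Rightarrow> ('a \<Rightarrow> 'a pmf) \<Rightarrow> (nat list \<times> 'a \<times> bool) \<Rightarrow> (nat \<times> 'a) measure" where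
  "BM d p \<equiv> (\<lambda>i. measure_pmf (pair_pmf (d (fst (snd i))) (p (fst (snd i)))))"

lemma bmc_space_eq: "bmc_space d p = Pi\<^sub>M UNIV (BM d p)"
  by (simp add: bmc_space_def)

lemma coord_meas:
  "(\<lambda>w. F (w c)) \<in> measurable (bmc_space d p) (count_space UNIV)"
  unfolding bmc_space_eq
  by (rule measurable_compose[OF measurable_component_singleton[of c UNIV]]) auto

lemma pos_meas:
  fixes d :: "'a::countable \<Rightarrow> nat pmf"
  shows "(\<lambda>w. bmc_pos x w u) \<in> measurable (bmc_space d p) (count_space UNIV)"
proof (induction u)
  case Nil then show ?case by simp
next
  case (Cons i u)
  show ?case
    by (simp only: bmc_pos.simps) (rule measurable_compose_countable'[OF coord_meas Cons], auto)
qed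

lemma nch_meas:
  fixes d :: "'a::countable \<Rightarrow> nat pmf"
  shows "(\<lambda>w. bmc_nchildren x w u) \<in> measurable (bmc_space d p) (count_space UNIV)"
  unfolding bmc_nchildren_def
  by (rule measurable_compose_countable'[OF coord_meas pos_meas]) auto

lemma alive_meas:
  fixes d :: "'a::countable \<Rightarrow> nat pmf"
  shows "(\<lambda>w. bmc_alive x w u) \<in> measurable (bmc_space d p) (count_space UNIV)"
proof (induction u)
  case Nil then show ?case by simp
next
  case (Cons i u)
  have "(\<lambda>w. b \<and> i < bmc_nchildren x w u) \<in> measurable (bmc_space d p) (count_space UNIV)" for b
    by (rule measurable_compose[OF nch_meas, where g="\<lambda>n. b \<and> i < n"]) auto
  then show ?case
    by (simp only: bmc_alive.simps) (rule measurable_compose_countable'[OF _ Cons], auto)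
qed

lemma sets_of_meas:
  assumes "g \<in> measurable M (count_space UNIV)"
  shows "{w\<in>space M. P (g w)} \<in> sets M"
proof -
  have "g -` {a. P a} \<inter> space M \<in> sets M" using assms by (rule measurable_sets) auto
  then show ?thesis by (simp add: vimage_def Int_def conj_commute)
qed

definition Ev :: "('a \<Rightarrow> nat pmf) \<Rightarrow> ('a \<Rightarrow> 'a pmf) \<Rightarrow> 'a \<Rightarrow> 'a set \<Rightarrow> nat list \<Rightarrow> 'a \<Rightarrow> _ set" where
  "Ev d p x B u z = {w\<in>space (bmc_space d p). bmc_alive x w u \<and> bmc_pos x w u = z
       \<and> (\<forall>k\<in>{1..length u}. bmc_pos x w (drop k u) \<notin> B)}"

lemma Ev_meas:
  fixes d :: "'a::countable \<Rightarrow> nat pmf"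
  shows "Ev d p x B u z \<in> sets (bmc_space d p)"
  unfolding Ev_def
  by (intro sets.sets_Collect_conj sets.sets_Collect_finite_All sets_of_meas alive_meas pos_meas) auto

lemma pos_upd_T: "bmc_pos x (w((v, s, True) := a)) u = bmc_pos x w u"
  by (induction u) auto

lemma pos_upd_len: "length u < length v \<Longrightarrow> bmc_pos x (w((v, s, b) := a)) u = bmc_pos x w u"
  by (induction u) auto

lemma alive_upd_T: "length u \<le> length v \<Longrightarrow> bmc_alive x (w((v, s, True) := a)) u = bmc_alive x w u"
  by (induction u) (auto simp: bmc_nchildren_def pos_upd_T)

lemma alive_upd_len: "length u < length v \<Longrightarrow> bmc_alive x (w((v, s, b) := a)) u = bmc_alive x w u"
  by (induction u) (auto simp: bmc_nchildren_def pos_upd_len)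

lemma space_bmc: "space (bmc_space d p) = UNIV \<rightarrow>\<^sub>E UNIV"
  by (simp add: bmc_space_eq space_PiM)

lemma Ev_upd_T: "w \<in> Ev d p x B v z \<longleftrightarrow> w((v, s, True) := a) \<in> Ev d p x B v z"
  by (auto simp: Ev_def pos_upd_T alive_upd_T space_bmc)

lemma Ev_upd_len:
  assumes "length v < length v'"
  shows "w \<in> Ev d p x B v z \<longleftrightarrow> w((v', s, b) := a) \<in> Ev d p x B v z"
proof -
  have "\<And>k. length (drop k v) < length v'" using assms by auto
  then show ?thesis using assms by (auto simp: Ev_def pos_upd_len alive_upd_len space_bmc)
qed

lemma ball_drop_Cons:
  "(\<forall>k\<in>{1..length (i # v)}. Q (drop k (i # v))) \<longleftrightarrow> Q v \<and> (\<forall>k\<in>{1..length v}. Q (drop k v))"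
proof
  assume a: "\<forall>k\<in>{1..length (i # v)}. Q (drop k (i # v))"
  have "Q (drop 1 (i # v))" by (rule a[rule_format]) simp
  moreover have "Q (drop k v)" if "k \<in> {1..length v}" for k
    using a[rule_format, of "Suc k"] that by auto
  ultimately show "Q v \<and> (\<forall>k\<in>{1..length v}. Q (drop k v))" by auto
next
  assume a: "Q v \<and> (\<forall>k\<in>{1..length v}. Q (drop k v))"
  show "\<forall>k\<in>{1..length (i # v)}. Q (drop k (i # v))"
  proof
    fix k assume k: "k \<in> {1..length (i # v)}"
    then obtain k' where k': "k = Suc k'" by (cases k) auto
    show "Q (drop k (i # v))"
    proof (cases k')
      case 0 then show ?thesis using a k' by simp
    next
      case (Suc k'') then show ?thesis using a k k' by auto
    qed
  qed
qed

lemma ball_drop_Cons_pos: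
  "(\<forall>k\<in>{1..length (i # v)}. bmc_pos x w (drop k (i # v)) \<notin> B)
     \<longleftrightarrow> bmc_pos x w v \<notin> B \<and> (\<forall>k\<in>{1..length v}. bmc_pos x w (drop k v) \<notin> B)"
  by (rule ball_drop_Cons)

lemma Ev_Cons:
  "Ev d p x B (i # v) w' = (\<Union>z\<in>-B. (Ev d p x B v z
       \<inter> {w\<in>space (bmc_space d p). w (v, z, True) \<in> {a. i < fst a}})
       \<inter> {w\<in>space (bmc_space d p). w (i # v, z, False) \<in> {a. snd a = w'}})"
  unfolding Ev_def ball_drop_Cons_pos by (auto simp: bmc_nchildren_def)

lemma Ev_Nil: "Ev d p x B [] z = (if x = z then space (bmc_space d p) else {})"
  unfolding Ev_def by auto

lemma prob_BM: "prob_space (BM d p i)"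
  by (rule measure_pmf.prob_space_axioms)

lemma indep_bmc:
  assumes "A \<in> sets (bmc_space d p)"
    and "\<And>w a. w \<in> space (bmc_space d p) \<Longrightarrow> (w(c:=a) \<in> A \<longleftrightarrow> w \<in> A)"
  shows "emeasure (bmc_space d p) (A \<inter> {w\<in>space (bmc_space d p). w c \<in> X})
       = emeasure (bmc_space d p) A * emeasure (BM d p c) X"
  using assms unfolding bmc_space_eq by (intro indep_coord[OF prob_BM]) auto

lemma Ev_Cons_measure:
  fixes d :: "'a::countable \<Rightarrow> nat pmf"
  shows "emeasure (bmc_space d p) (Ev d p x B (i # v) w')
     = (\<integral>\<^sup>+z. indicator (-B) z * (emeasure (bmc_space d p) (Ev d p x B v z)
           * emeasure (measure_pmf (d z)) {i<..} * ennreal (pmf (p z) w')) \<partial>count_space UNIV)"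
proof -
  let ?P = "bmc_space d p"
  let ?C1 = "\<lambda>z. {w\<in>space ?P. w (v, z, True) \<in> {a. i < fst a}}"
  let ?C2 = "\<lambda>z. {w\<in>space ?P. w (i # v, z, False) \<in> {a. snd a = w'}}"
  have C1m: "?C1 z \<in> sets ?P" for z by (rule sets_of_meas[OF coord_meas[where F="\<lambda>a. a"]])
  have C2m: "?C2 z \<in> sets ?P" for z by (rule sets_of_meas[OF coord_meas[where F="\<lambda>a. a"]])
  have "emeasure ?P (Ev d p x B (i # v) w')
      = (\<integral>\<^sup>+z. emeasure ?P ((Ev d p x B v z \<inter> ?C1 z) \<inter> ?C2 z) \<partial>count_space (-B))"
    unfolding Ev_Cons
  proof (rule emeasure_UN_countable)
    show "disjoint_family_on (\<lambda>z. (Ev d p x B v z \<inter> ?C1 z) \<inter> ?C2 z) (- B)"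
      by (auto simp: disjoint_family_on_def Ev_def)
  qed ((intro sets.Int Ev_meas C1m C2m) | simp)+
  also have "\<dots> = (\<integral>\<^sup>+z. indicator (-B) z * (emeasure ?P (Ev d p x B v z)
           * emeasure (measure_pmf (d z)) {i<..} * ennreal (pmf (p z) w')) \<partial>count_space UNIV)"
  proof -
    have eq: "emeasure ?P ((Ev d p x B v z \<inter> ?C1 z) \<inter> ?C2 z)
        = emeasure ?P (Ev d p x B v z) * emeasure (measure_pmf (d z)) {i<..} * ennreal (pmf (p z) w')" for z
    proof -
      have "emeasure ?P ((Ev d p x B v z \<inter> ?C1 z) \<inter> ?C2 z)
          = emeasure ?P (Ev d p x B v z \<inter> ?C1 z) * emeasure (BM d p (i # v, z, False)) {a. snd a = w'}"
      proof (rule indep_bmc)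
        show "Ev d p x B v z \<inter> ?C1 z \<in> sets ?P" by (intro sets.Int Ev_meas C1m)
        fix w a assume w: "w \<in> space ?P"
        have "w((i # v, z, False) := a) \<in> Ev d p x B v z \<longleftrightarrow> w \<in> Ev d p x B v z"
          using Ev_upd_len[of v "i # v" w d p x B z z False a] by simp
        then show "(w((i # v, z, False) := a) \<in> Ev d p x B v z \<inter> ?C1 z) = (w \<in> Ev d p x B v z \<inter> ?C1 z)"
          using w by (auto simp: space_bmc)
      qed
      also have "emeasure ?P (Ev d p x B v z \<inter> ?C1 z)
          = emeasure ?P (Ev d p x B v z) * emeasure (BM d p (v, z, True)) {a. i < fst a}"
      proof (rule indep_bmc)
        show "Ev d p x B v z \<in> sets ?P" by (rule Ev_meas)
        fix w a
        show "(w((v, z, True) := a) \<in> Ev d p x B v z) = (w \<in> Ev d p x B v z)"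
          using Ev_upd_T by metis
      qed
      also have "emeasure (BM d p (v, z, True)) {a. i < fst a} = emeasure (measure_pmf (d z)) {i<..}"
      proof -
        have "emeasure (measure_pmf (map_pmf fst (pair_pmf (d z) (p z)))) {i<..} = emeasure (measure_pmf (d z)) {i<..}"
          by (simp add: map_fst_pair_pmf)
        then show ?thesis by (simp add: vimage_def)
      qed
      also have "emeasure (BM d p (i # v, z, False)) {a. snd a = w'} = ennreal (pmf (p z) w')"
      proof -
        have "emeasure (measure_pmf (map_pmf snd (pair_pmf (d z) (p z)))) {w'} = ennreal (pmf (p z) w')"
          by (simp add: map_snd_pair_pmf emeasure_pmf_single)
        then show ?thesis by (simp add: vimage_def)
      qed
      finally show ?thesis .
    qed
    show ?thesis
      unfolding eq by (subst nn_integral_count_space_indicator) (auto intro!: nn_integral_cong simp: mult.commute)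
  qed
  finally show ?thesis .
qed



lemma prob_bmc: "prob_space (bmc_space d p)"
  unfolding bmc_space_eq by (intro prob_space_PiM prob_BM)

lemma mean_tail: "mean_offspring d z = (\<integral>\<^sup>+i. emeasure (measure_pmf (d z)) {i<..} \<partial>count_space UNIV)"
  unfolding mean_offspring_def by (rule sum_tail[symmetric])

lemma T_eq:
  fixes d :: "'a::countable \<Rightarrow> nat pmf"
  shows "(\<integral>\<^sup>+u. indicator {u. length u = n} u * emeasure (bmc_space d p) (Ev d p x B u w) \<partial>count_space UNIV)
       = Fp d p B n x w"
proof (induction n arbitrary: w)
  case 0
  show ?case
    by (simp only: list_len_0) (simp add: Ev_Nil prob_space.emeasure_space_1[OF prob_bmc])
next
  case (Suc n)
  define P where "P v z = emeasure (bmc_space d p) (Ev d p x B v z)" for v z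
  define t where "t z i = emeasure (measure_pmf (d z)) {i<..}" for z i
  define \<pi> where "\<pi> z = ennreal (pmf (p z) w)" for z
  define L where "L v = (indicator {v. length v = n} v :: ennreal)" for v :: "nat list"
  define I where "I z = (indicator (-B) z :: ennreal)" for z
  have "(\<integral>\<^sup>+u. indicator {u. length u = Suc n} u * emeasure (bmc_space d p) (Ev d p x B u w) \<partial>count_space UNIV)
      = (\<integral>\<^sup>+i. \<integral>\<^sup>+v. L v * (\<integral>\<^sup>+z. I z * (P v z * t z i * \<pi> z) \<partial>count_space UNIV) \<partial>count_space UNIV \<partial>count_space UNIV)"
    unfolding list_len_Suc Ev_Cons_measure L_def I_def P_def t_def \<pi>_def ..
  also have "\<dots> = (\<integral>\<^sup>+i. \<integral>\<^sup>+v. \<integral>\<^sup>+z. L v * (I z * (P v z * t z i * \<pi> z)) \<partial>count_space UNIV \<partial>count_space UNIV \<partial>count_space UNIV)"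
    by (simp add: nn_integral_cmult)
  also have "\<dots> = (\<integral>\<^sup>+i. \<integral>\<^sup>+z. \<integral>\<^sup>+v. L v * (I z * (P v z * t z i * \<pi> z)) \<partial>count_space UNIV \<partial>count_space UNIV \<partial>count_space UNIV)"
    by (rule nn_integral_cong, rule nn_swap)
  also have "\<dots> = (\<integral>\<^sup>+z. \<integral>\<^sup>+i. \<integral>\<^sup>+v. L v * (I z * (P v z * t z i * \<pi> z)) \<partial>count_space UNIV \<partial>count_space UNIV \<partial>count_space UNIV)"
    by (rule nn_swap)
  also have "\<dots> = (\<integral>\<^sup>+z. \<integral>\<^sup>+v. \<integral>\<^sup>+i. L v * (I z * (P v z * t z i * \<pi> z)) \<partial>count_space UNIV \<partial>count_space UNIV \<partial>count_space UNIV)"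
    by (rule nn_integral_cong, rule nn_swap)
  also have "\<dots> = (\<integral>\<^sup>+z. \<integral>\<^sup>+v. (L v * P v z) * (I z * mean_offspring d z * \<pi> z) \<partial>count_space UNIV \<partial>count_space UNIV)"
  proof (intro nn_integral_cong)
    fix z v
    have "(\<integral>\<^sup>+i. L v * (I z * (P v z * t z i * \<pi> z)) \<partial>count_space UNIV)
        = (\<integral>\<^sup>+i. (L v * I z * P v z * \<pi> z) * t z i \<partial>count_space UNIV)"
      by (intro nn_integral_cong) (simp add: ac_simps)
    also have "\<dots> = (L v * I z * P v z * \<pi> z) * (\<integral>\<^sup>+i. t z i \<partial>count_space UNIV)"
      by (rule nn_integral_cmult) simp
    also have "\<dots> = (L v * P v z) * (I z * mean_offspring d z * \<pi> z)"
      by (simp add: mean_tail t_def ac_simps)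
    finally show "(\<integral>\<^sup>+i. L v * (I z * (P v z * t z i * \<pi> z)) \<partial>count_space UNIV)
        = (L v * P v z) * (I z * mean_offspring d z * \<pi> z)" .
  qed
  also have "\<dots> = (\<integral>\<^sup>+z. (\<integral>\<^sup>+v. L v * P v z \<partial>count_space UNIV) * (I z * mean_offspring d z * \<pi> z) \<partial>count_space UNIV)"
    by (intro nn_integral_cong nn_integral_multc) simp
  also have "\<dots> = Fp d p B (Suc n) x w"
    unfolding Suc[unfolded L_def[symmetric] P_def[symmetric]]
    by (simp add: I_def \<pi>_def qmat_def ac_simps del: Fp.simps(1))
  finally show ?case .
qed



lemma HB_Ev:
  assumes "w \<in> space (bmc_space d p)"
  shows "u \<in> HB B x w \<longleftrightarrow> w \<in> (\<Union>z\<in>B. Ev d p x B u z)"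
  using assms unfolding HB_def Ev_def by auto

lemma hfunE_eq:
  fixes d :: "'a::countable \<Rightarrow> nat pmf"
  assumes finB: "finite B"
  shows "hfunE d p B x = (\<Sum>z\<in>B. Gt d p B x z)"
proof -
  let ?P = "bmc_space d p"
  have UNm: "(\<Union>z\<in>B. Ev d p x B u z) \<in> sets ?P" for u
    using finB by (intro sets.finite_UN Ev_meas) auto
  have ind: "indicator (HB B x w) u = indicator (\<Union>z\<in>B. Ev d p x B u z) w"
    if "w \<in> space ?P" for w u
    using HB_Ev[OF that, of u B x] by (simp split: split_indicator)
  have "hfunE d p B x = (\<integral>\<^sup>+w. \<integral>\<^sup>+u. indicator (HB B x w) u \<partial>count_space UNIV \<partial>?P)"
    unfolding hfunE_def by (intro nn_integral_cong nn_integral_indicator[symmetric]) simp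
  also have "\<dots> = (\<integral>\<^sup>+w. \<integral>\<^sup>+u. indicator (\<Union>z\<in>B. Ev d p x B u z) w \<partial>count_space UNIV \<partial>?P)"
    by (intro nn_integral_cong) (simp add: ind)
  also have "\<dots> = (\<integral>\<^sup>+u. \<integral>\<^sup>+w. indicator (\<Union>z\<in>B. Ev d p x B u z) w \<partial>?P \<partial>count_space UNIV)"
    by (rule nn_integral_count_space_nn_integral) (auto intro: borel_measurable_indicator UNm)
  also have "\<dots> = (\<integral>\<^sup>+u. (\<Sum>z\<in>B. emeasure ?P (Ev d p x B u z)) \<partial>count_space UNIV)"
  proof (rule nn_integral_cong)
    fix u
    have "(\<integral>\<^sup>+w. indicator (\<Union>z\<in>B. Ev d p x B u z) w \<partial>?P) = emeasure ?P (\<Union>z\<in>B. Ev d p x B u z)"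
      by (rule nn_integral_indicator[OF UNm])
    also have "\<dots> = (\<integral>\<^sup>+z. emeasure ?P (Ev d p x B u z) \<partial>count_space B)"
    proof (rule emeasure_UN_countable)
      show "disjoint_family_on (Ev d p x B u) B" by (auto simp: disjoint_family_on_def Ev_def)
    qed (simp_all add: Ev_meas finB countable_finite)
    also have "\<dots> = (\<Sum>z\<in>B. emeasure ?P (Ev d p x B u z))"
      using finB by (simp add: nn_integral_count_space_finite)
    finally show "(\<integral>\<^sup>+w. indicator (\<Union>z\<in>B. Ev d p x B u z) w \<partial>?P) = (\<Sum>z\<in>B. emeasure ?P (Ev d p x B u z))" .
  qed
  also have "\<dots> = (\<Sum>z\<in>B. \<integral>\<^sup>+u. emeasure ?P (Ev d p x B u z) \<partial>count_space UNIV)"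
    by (rule nn_integral_sum) simp
  also have "\<dots> = (\<Sum>z\<in>B. Gt d p B x z)"
    unfolding Gt_def by (intro sum.cong refl) (subst sum_by_len, simp only: T_eq)
  finally show ?thesis .
qed



lemma nn_option:
  fixes g :: "'b option \<Rightarrow> ennreal"
  shows "(\<integral>\<^sup>+t. g t \<partial>count_space UNIV) = g None + (\<integral>\<^sup>+y. g (Some y) \<partial>count_space UNIV)"
proof -
  have "(\<integral>\<^sup>+t. g t \<partial>count_space UNIV)
      = (\<integral>\<^sup>+t. g t * indicator {None} t + g t * indicator (range Some) t \<partial>count_space UNIV)"
    by (rule nn_integral_cong) (auto split: split_indicator option.splits)
  also have "\<dots> = g None + (\<integral>\<^sup>+t. g t * indicator (range Some) t \<partial>count_space UNIV)"
    by (subst nn_integral_add) auto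
  also have "(\<integral>\<^sup>+t. g t * indicator (range Some) t \<partial>count_space UNIV) = (\<integral>\<^sup>+t. g t \<partial>count_space (range Some))"
    by (simp add: nn_integral_count_space_indicator)
  also have "\<dots> = (\<integral>\<^sup>+y. g (Some y) \<partial>count_space UNIV)"
    by (rule nn_integral_bij_count_space[symmetric]) (auto simp: bij_betw_def)
  finally show ?thesis .
qed

lemma enn2real_sum:
  assumes "\<And>i. i \<in> I \<Longrightarrow> f i < \<top>"
  shows "enn2real (sum f I) = (\<Sum>i\<in>I. enn2real (f i))"
  using assms
proof (induction I rule: infinite_finite_induct)
  case (insert i I)
  then have "sum f I < \<top>" by (simp add: sum_Pinfty less_top)
  with insert show ?case by (simp add: enn2real_plus)
qed auto

context
  fixes d :: "'a::countable \<Rightarrow> nat pmf" and p :: "'a \<Rightarrow> 'a pmf" and B :: "'a set"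
  assumes gf: "\<forall>u v. green d p u v < \<infinity>"
    and nr: "norming_region d p B"
begin

lemma gf': "green d p u v < \<top>" using gf by simp

lemma finB: "finite B" using nr by (simp add: norming_region_def)

lemma Gt_fin: "Gt d p B x y < \<top>"
  by (rule order_le_less_trans[OF Gt_le_green gf'])

lemma h_eq: "hfunE d p B x = (\<Sum>z\<in>B. Gt d p B x z)"
  by (rule hfunE_eq[OF finB])

lemma h_fin: "hfunE d p B x < \<top>"
  unfolding h_eq using finB Gt_fin by (simp add: sum_Pinfty less_top)

lemma h_B: "x \<in> B \<Longrightarrow> hfunE d p B x = 1"
  unfolding h_eq using finB by (simp add: Gt_B sum.delta)

lemma h_pos: "hfunE d p B x > 0"
proof -
  have s: "(\<Sum>y\<in>B. green d p x y) > 0" using nr by (simp add: norming_region_def)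
  have "\<exists>w\<in>B. green d p x w \<noteq> 0"
  proof (rule ccontr)
    assume "\<not> (\<exists>w\<in>B. green d p x w \<noteq> 0)"
    then have "(\<Sum>y\<in>B. green d p x y) = 0" by simp
    with s show False by simp
  qed
  then obtain w where w: "w \<in> B" "green d p x w \<noteq> 0" by blast
  have "green d p x w = Gt d p B x w * indicator (-B) w + (\<Sum>z\<in>B. Gt d p B x z * green d p z w)"
    by (rule green_decomp[OF finB])
  then have eq: "green d p x w = (\<Sum>z\<in>B. Gt d p B x z * green d p z w)"
    using w(1) by simp
  have "\<exists>z\<in>B. Gt d p B x z * green d p z w \<noteq> 0"
  proof (rule ccontr)
    assume "\<not> (\<exists>z\<in>B. Gt d p B x z * green d p z w \<noteq> 0)"
    then have "(\<Sum>z\<in>B. Gt d p B x z * green d p z w) = 0" by (intro sum.neutral) auto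
    with eq w(2) show False by simp
  qed
  then obtain z where z: "z \<in> B" "Gt d p B x z \<noteq> 0" by auto
  have "Gt d p B x z \<le> (\<Sum>z\<in>B. Gt d p B x z)"
    using z(1) finB by (intro member_le_sum) auto
  moreover have "0 < Gt d p B x z" using z(2) by (simp add: zero_less_iff_neq_zero)
  ultimately show ?thesis unfolding h_eq by (rule order_less_le_trans[rotated])
qed

lemma h_real: "hfunE d p B x = ennreal (hfun d p B x)"
  unfolding hfun_def using h_fin by (simp add: ennreal_enn2real)

lemma hfun_pos: "hfun d p B x > 0"
  using h_pos[of x] unfolding h_real[of x] by simp

lemma q_fin: "qmat d p z y < \<top>"
proof -
  have "Qpow d p 1 z y = qmat d p z y" by (simp add: nn_delta_right)
  moreover have "Qpow d p 1 z y \<le> green d p z y"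
    unfolding green_def using sum_le_suminf[of "\<lambda>n. Qpow d p n z y" "{1}"] by simp
  ultimately show ?thesis using gf'[of z y] by simp
qed

lemma harmonic:
  assumes z: "z \<notin> B"
  shows "(\<integral>\<^sup>+y. qmat d p z y * hfunE d p B y \<partial>count_space UNIV) = hfunE d p B z"
proof -
  have "(\<integral>\<^sup>+y. qmat d p z y * hfunE d p B y \<partial>count_space UNIV)
      = (\<integral>\<^sup>+y. (\<Sum>w\<in>B. qmat d p z y * Gt d p B y w) \<partial>count_space UNIV)"
    unfolding h_eq by (simp add: sum_distrib_left)
  also have "\<dots> = (\<Sum>w\<in>B. \<integral>\<^sup>+y. qmat d p z y * Gt d p B y w \<partial>count_space UNIV)"
    by (rule nn_integral_sum) simp
  also have "\<dots> = (\<Sum>w\<in>B. \<Sum>n. \<integral>\<^sup>+y. qmat d p z y * Fp d p B n y w \<partial>count_space UNIV)"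
  proof (rule sum.cong[OF refl])
    fix w
    have "(\<integral>\<^sup>+y. qmat d p z y * Gt d p B y w \<partial>count_space UNIV)
        = (\<integral>\<^sup>+y. (\<Sum>n. qmat d p z y * Fp d p B n y w) \<partial>count_space UNIV)"
      unfolding Gt_def by (simp only: ennreal_suminf_cmult)
    also have "\<dots> = (\<Sum>n. \<integral>\<^sup>+y. qmat d p z y * Fp d p B n y w \<partial>count_space UNIV)"
      by (rule nn_integral_suminf) simp
    finally show "(\<integral>\<^sup>+y. qmat d p z y * Gt d p B y w \<partial>count_space UNIV)
        = (\<Sum>n. \<integral>\<^sup>+y. qmat d p z y * Fp d p B n y w \<partial>count_space UNIV)" .
  qed
  also have "\<dots> = (\<Sum>w\<in>B. \<Sum>n. Fp d p B (Suc n) z w)"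
    using z by (simp add: Fp_left del: Fp.simps)
  also have "\<dots> = (\<Sum>w\<in>B. Gt d p B z w)"
  proof (rule sum.cong[OF refl])
    fix w assume "w \<in> B"
    then have "Fp d p B 0 z w = 0" using z by auto
    then show "(\<Sum>n. Fp d p B (Suc n) z w) = Gt d p B z w"
      unfolding Gt_def using suminf_offset[of "\<lambda>n. Fp d p B n z w" 1] by (simp del: Fp.simps(2))
  qed
  finally show ?thesis by (simp add: h_eq)
qed

lemma W_nonneg0: "ph_weight d p B z y \<ge> 0"
  using hfun_pos[of z] hfun_pos[of y] by (simp add: ph_weight_def)

lemma hW: "hfunE d p B z * ennreal (ph_weight d p B z y) = indicator (-B) z * qmat d p z y * hfunE d p B y"
proof (cases "z \<in> B")
  case True then show ?thesis by (simp add: ph_weight_def)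
next
  case False
  have W: "ph_weight d p B z y = enn2real (qmat d p z y) * hfun d p B y / hfun d p B z"
    using False by (simp add: ph_weight_def)
  have "hfunE d p B z * ennreal (ph_weight d p B z y) = ennreal (hfun d p B z * ph_weight d p B z y)"
    using hfun_pos[of z] W_nonneg0 by (simp add: h_real ennreal_mult)
  also have "hfun d p B z * ph_weight d p B z y = enn2real (qmat d p z y) * hfun d p B y"
    unfolding W using hfun_pos[of z] by simp
  also have "ennreal (enn2real (qmat d p z y) * hfun d p B y) = ennreal (enn2real (qmat d p z y)) * ennreal (hfun d p B y)"
    using hfun_pos[of y] by (simp add: ennreal_mult)
  also have "\<dots> = indicator (-B) z * qmat d p z y * hfunE d p B y"
    using False q_fin[of z y] by (simp add: ennreal_enn2real h_real)
  finally show ?thesis .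
qed

lemma W_sum: "(\<integral>\<^sup>+y. ennreal (ph_weight d p B z y) \<partial>count_space UNIV) = (if z \<in> B then 0 else 1)"
proof (cases "z \<in> B")
  case True then show ?thesis by (simp add: ph_weight_def)
next
  case False
  have "hfunE d p B z * (\<integral>\<^sup>+y. ennreal (ph_weight d p B z y) \<partial>count_space UNIV)
      = (\<integral>\<^sup>+y. hfunE d p B z * ennreal (ph_weight d p B z y) \<partial>count_space UNIV)"
    by (simp add: nn_integral_cmult)
  also have "\<dots> = hfunE d p B z" using False by (simp add: hW harmonic)
  finally have "hfunE d p B z * (\<integral>\<^sup>+y. ennreal (ph_weight d p B z y) \<partial>count_space UNIV) = hfunE d p B z" .
  then show ?thesis using False h_pos[of z] h_fin[of z]
    by (metis ennreal_mult_cancel_left mult.comm_neutral not_less_zero top.not_eq_extremum)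
qed

lemma W_nonneg: "ph_weight d p B z y \<ge> 0"
  using hfun_pos[of z] hfun_pos[of y] by (simp add: ph_weight_def)

lemma pmf_K_Some: "pmf (ph_kernel d p B (Some z)) (Some y) = ph_weight d p B z y"
  and pmf_K_None: "pmf (ph_kernel d p B None) (Some y) = 0"
proof -
  define f where "f s t = (case s of
       None \<Rightarrow> (if t = None then 1 else 0)
     | Some z \<Rightarrow> (case t of
           Some y \<Rightarrow> ph_weight d p B z y
         | None \<Rightarrow> 1 - enn2real (\<integral>\<^sup>+ y. ennreal (ph_weight d p B z y) \<partial>count_space UNIV)))" for s t
  have K: "ph_kernel d p B s = embed_pmf (f s)" for s
    unfolding ph_kernel_def f_def ..
  have valid: "(\<forall>t. 0 \<le> f s t) \<and> (\<integral>\<^sup>+t. ennreal (f s t) \<partial>count_space UNIV) = 1" for s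
  proof (cases s)
    case None then show ?thesis by (simp add: f_def nn_option)
  next
    case (Some z)
    show ?thesis
      using Some W_sum[of z] W_nonneg[of z] by (simp add: f_def nn_option split: option.splits if_splits)
  qed
  have "pmf (embed_pmf (f s)) t = f s t" for s t
    using valid[of s] by (intro pmf_embed_pmf) auto
  then show "pmf (ph_kernel d p B (Some z)) (Some y) = ph_weight d p B z y"
    "pmf (ph_kernel d p B None) (Some y) = 0"
    by (simp_all add: K f_def)
qed

lemma Kp_Some:
  "Kp (ph_kernel d p B) (Some x) n (Some y) * hfunE d p B x = Fp d p B n x y * hfunE d p B y"
proof (induction n arbitrary: y)
  case 0 then show ?case by simp
next
  case (Suc n)
  let ?K = "ph_kernel d p B"
  have "Kp ?K (Some x) (Suc n) (Some y) = (\<integral>\<^sup>+z. Kp ?K (Some x) n (Some z) * ennreal (ph_weight d p B z y) \<partial>count_space UNIV)"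
    by (simp only: Kp.simps nn_option pmf_K_Some pmf_K_None) simp
  then have "Kp ?K (Some x) (Suc n) (Some y) * hfunE d p B x
      = (\<integral>\<^sup>+z. Kp ?K (Some x) n (Some z) * ennreal (ph_weight d p B z y) \<partial>count_space UNIV) * hfunE d p B x"
    by simp
  also have "\<dots> = (\<integral>\<^sup>+z. (Kp ?K (Some x) n (Some z) * ennreal (ph_weight d p B z y)) * hfunE d p B x \<partial>count_space UNIV)"
    by (rule nn_integral_multc[symmetric]) simp
  also have "\<dots> = (\<integral>\<^sup>+z. (Kp ?K (Some x) n (Some z) * hfunE d p B x) * ennreal (ph_weight d p B z y) \<partial>count_space UNIV)"
    by (simp add: ac_simps)
  also have "\<dots> = (\<integral>\<^sup>+z. Fp d p B n x z * (hfunE d p B z * ennreal (ph_weight d p B z y)) \<partial>count_space UNIV)"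
    by (simp only: Suc) (simp add: ac_simps)
  also have "\<dots> = (\<integral>\<^sup>+z. (Fp d p B n x z * indicator (-B) z * qmat d p z y) * hfunE d p B y \<partial>count_space UNIV)"
    by (simp only: hW) (simp add: ac_simps)
  also have "\<dots> = (\<integral>\<^sup>+z. Fp d p B n x z * indicator (-B) z * qmat d p z y \<partial>count_space UNIV) * hfunE d p B y"
    by (rule nn_integral_multc) simp
  also have "\<dots> = Fp d p B (Suc n) x y * hfunE d p B y"
    by (simp only: Fp.simps(2))
  finally show ?case .
qed

lemma hvisits_sum: "hvisits d p B x y = (\<Sum>n. Kp (ph_kernel d p B) (Some x) n (Some y))"
  unfolding hvisits_def hchain_space_def hchain_eq_chain by (rule chain_visits)

lemma hvisits_eq: "hvisits d p B x y * hfunE d p B x = Gt d p B x y * hfunE d p B y"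
proof -
  have "hvisits d p B x y * hfunE d p B x = (\<Sum>n. Kp (ph_kernel d p B) (Some x) n (Some y) * hfunE d p B x)"
    unfolding hvisits_sum by (rule ennreal_suminf_multc[symmetric])
  also have "\<dots> = (\<Sum>n. Fp d p B n x y * hfunE d p B y)"
    by (simp only: Kp_Some)
  also have "\<dots> = Gt d p B x y * hfunE d p B y"
    unfolding Gt_def by (rule ennreal_suminf_multc)
  finally show ?thesis .
qed

end



theorem mainTheorem10:
  fixes d :: "'a::countable \<Rightarrow> nat pmf" and p :: "'a \<Rightarrow> 'a pmf"
    and B :: "'a set" and x :: 'a
  assumes green_finite: "\<forall>u v. green d p u v < \<infinity>"
    and norming: "norming_region d p B"
  shows "\<forall>y. enn2real (green d p x y)
           = indicator (-B) y * (mu_meas d p B x y / hfun d p B y)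
             + (\<Sum>z\<in>B. mu_meas d p B x z * enn2real (green d p z y))"
proof
  fix y
  note A = green_finite norming
  have mu: "mu_meas d p B x v = enn2real (Gt d p B x v) * hfun d p B v" for v
  proof -
    have "mu_meas d p B x v = enn2real (hvisits d p B x v * hfunE d p B x)"
      unfolding mu_meas_def hfun_def by (simp add: enn2real_mult mult.commute)
    also have "\<dots> = enn2real (Gt d p B x v * hfunE d p B v)"
      by (simp only: hvisits_eq[OF A])
    finally show ?thesis unfolding hfun_def by (simp add: enn2real_mult)
  qed
  have finB: "finite B" by (rule finB[OF A])
  have hB: "hfun d p B z = 1" if "z \<in> B" for z
    unfolding hfun_def using h_B[OF A that] by simp
  have Gfin: "Gt d p B x v < \<top>" for v by (rule Gt_fin[OF A])
  have gfin: "green d p u v < \<top>" for u v by (rule gf'[OF A])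
  have "indicator (-B) y * (mu_meas d p B x y / hfun d p B y)
             + (\<Sum>z\<in>B. mu_meas d p B x z * enn2real (green d p z y))
      = enn2real (Gt d p B x y) * indicator (-B) y
             + (\<Sum>z\<in>B. enn2real (Gt d p B x z) * enn2real (green d p z y))"
    using hfun_pos[OF A, of y] hB by (simp add: mu)
  also have "\<dots> = enn2real (Gt d p B x y * indicator (-B) y + (\<Sum>z\<in>B. Gt d p B x z * green d p z y))"
  proof -
    have s: "(\<Sum>z\<in>B. Gt d p B x z * green d p z y) < \<top>"
    proof -
      have "Gt d p B x z * green d p z y < \<top>" for z
        using Gfin[of z] gfin[of z y] by (simp add: ennreal_mult_less_top)
      then show ?thesis using finB by (simp add: sum_Pinfty less_top)
    qed
    have t: "Gt d p B x y * indicator (-B) y < \<top>"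
      using Gfin by (simp add: less_top ennreal_mult_eq_top_iff split: split_indicator)
    have "enn2real (\<Sum>z\<in>B. Gt d p B x z * green d p z y) = (\<Sum>z\<in>B. enn2real (Gt d p B x z) * enn2real (green d p z y))"
      using Gfin gfin by (subst enn2real_sum) (auto simp: enn2real_mult ennreal_mult_less_top)
    then show ?thesis using s t
      by (simp add: enn2real_plus enn2real_mult split: split_indicator)
  qed
  also have "\<dots> = enn2real (green d p x y)"
    by (simp only: green_decomp[OF finB, symmetric])
  finally show "enn2real (green d p x y)
           = indicator (-B) y * (mu_meas d p B x y / hfun d p B y)
             + (\<Sum>z\<in>B. mu_meas d p B x z * enn2real (green d p z y))" ..
qed


end
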